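(* Let $\mathcal A$ be a unital C*-algebra, $\alpha\in\mathrm{Aut}(\mathcal A)$, $\mathscr A=\mathcal A\rtimes_\alpha\mathbb Z$. For any $b\in\mathscr A$ the Fejér approximants satisfy $\lim_{N\to\infty}\|b-b^{(N)}\|=0$. Moreover, if $\partial b\in\mathscr A$ exists, then $\|b-b^{(N)}\|\le\frac{\pi}{\sqrt N}\|\partial b\|+\frac{2}{\sqrt N}\|b\|$.
   Context: Dual action $\eta_k$, $k\in\mathbb T=\mathbb R/2\pi\mathbb Z$ (identified with $[-\pi,\pi)$): $\eta_k(a)=a$ for $a\in\mathcal A$, $\eta_k(u)=e^{ik}u$, $u$ the unitary implementing $\alpha$. $\partial b=\frac{d}{dk}\eta_k(b)|_{k=0}$ (norm derivative). Fejér kernel $F_N(k)=\frac1N\frac{\sin^2(Nk/2)}{\sin^2(k/2)}$; Fejér approximant $b^{(N)}=\int_{-\pi}^{\pi}F_N(k)\eta_k(b)\frac{dk}{2\pi}$. *)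

theory Defs
  imports "HOL-Analysis.Analysis"
begin

text \<open>Fejer kernel F_N(k) = (1/N) sin^2(Nk/2)/sin^2(k/2), with its continuous
  value N at the removable singularities sin(k/2) = 0.\<close>
definition fejer_kernel :: "nat \<Rightarrow> real \<Rightarrow> real" where
  "fejer_kernel N k =
     (if sin (k / 2) = 0 then real N
      else (sin (real N * k / 2))^2 / (real N * (sin (k / 2))^2))"

definition fejer_approx :: "(real \<Rightarrow> 'a \<Rightarrow> 'a::banach) \<Rightarrow> nat \<Rightarrow> 'a \<Rightarrow> 'a" where
  "fejer_approx \<eta> N b =
     integral {-pi..pi} (\<lambda>k. (fejer_kernel N k / (2 * pi)) *\<^sub>R \<eta> k b)"

text \<open>Abstract properties of the dual action of T = R/2piZ on the crossed product:
  a 2pi-periodic one-parameter group of isometric unital algebra automorphisms,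
  strongly (pointwise norm-) continuous.\<close>
definition dual_action :: "(real \<Rightarrow> 'a \<Rightarrow> 'a::{banach,real_normed_algebra_1}) \<Rightarrow> bool" where
  "dual_action \<eta> \<longleftrightarrow>
     (\<forall>k. linear (\<eta> k)) \<and>
     (\<forall>k x. norm (\<eta> k x) = norm x) \<and>
     (\<forall>k x y. \<eta> k (x * y) = \<eta> k x * \<eta> k y) \<and>
     (\<forall>k. \<eta> k 1 = 1) \<and>
     (\<forall>x. \<eta> 0 x = x) \<and>
     (\<forall>k h x. \<eta> (k + h) x = \<eta> k (\<eta> h x)) \<and>
     (\<forall>k x. \<eta> (k + 2 * pi) x = \<eta> k x) \<and>
     (\<forall>x. continuous_on UNIV (\<lambda>k. \<eta> k x))"

end

theory Submission
  imports Defs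
begin

definition Dk :: "nat \<Rightarrow> real \<Rightarrow> real" where
  "Dk m k = 1 + 2 * (\<Sum>j\<in>{1..m}. cos (real j * k))"
definition Gk :: "nat \<Rightarrow> real \<Rightarrow> real" where
  "Gk N k = (\<Sum>m<N. Dk m k)"

lemma sin_Dk: "sin (k/2) * Dk m k = sin ((2 * real m + 1) * k / 2)"
proof (induction m)
  case 0 then show ?case by (simp add: Dk_def)
next
  case (Suc m)
  have "Dk (Suc m) k = Dk m k + 2 * cos (real (Suc m) * k)"
    by (simp add: Dk_def algebra_simps)
  hence "sin (k/2) * Dk (Suc m) k = sin ((2 * real m + 1) * k / 2) + 2 * (sin (k/2) * cos (real (Suc m) * k))"
    using Suc by (simp add: algebra_simps)
  also have "2 * (sin (k/2) * cos (real (Suc m) * k)) = sin (k/2 + real (Suc m) * k) + sin (k/2 - real (Suc m) * k)"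
    by (simp add: sin_times_cos)
  also have "k/2 + real (Suc m) * k = (2 * real (Suc m) + 1) * k / 2" by (simp add: algebra_simps)
  also have "k/2 - real (Suc m) * k = - ((2 * real m + 1) * k / 2)" by (simp add: algebra_simps)
  finally show ?case by simp
qed

lemma sin_Gk: "(sin (k/2))^2 * Gk N k = (sin (real N * k / 2))^2"
proof (induction N)
  case 0 then show ?case by (simp add: Gk_def)
next
  case (Suc N)
  have "(sin (k/2))^2 * Gk (Suc N) k = (sin (real N * k / 2))^2 + sin (k/2) * (sin (k/2) * Dk N k)"
    using Suc by (simp add: Gk_def algebra_simps power2_eq_square)
  also have "sin (k/2) * (sin (k/2) * Dk N k) = (cos (k/2 - (2 * real N + 1) * k / 2) - cos (k/2 + (2 * real N + 1) * k / 2)) / 2"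
    by (simp add: sin_Dk sin_times_sin)
  also have "k/2 - (2 * real N + 1) * k / 2 = - (2 * (real N * k / 2))" by (simp add: algebra_simps)
  also have "k/2 + (2 * real N + 1) * k / 2 = 2 * (real (Suc N) * k / 2)" by (simp add: algebra_simps)
  finally show ?case by (simp only: cos_minus cos_double_sin) (simp add: field_simps)
qed

lemma Gk_zero: assumes "sin (k/2) = 0" shows "Gk N k = real N ^ 2"
proof -
  obtain i::int where i: "k/2 = of_int i * pi" using assms sin_zero_iff_int2 by blast
  have c: "cos (real j * k) = 1" for j
  proof -
    have "real j * k = (2*pi) * of_int (int j * i)" using i by (simp add: algebra_simps)
    then show ?thesis by (simp only: cos_int_2pin)
  qed
  have D: "Dk m k = 2 * real m + 1" for m by (simp add: Dk_def c)
  show ?thesis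
    by (induction N) (simp_all add: Gk_def D power2_eq_square algebra_simps)
qed

lemma fejer_Gk: assumes "N \<ge> 1" shows "fejer_kernel N k = Gk N k / real N"
proof (cases "sin (k/2) = 0")
  case True then show ?thesis using assms by (simp add: fejer_kernel_def Gk_zero power2_eq_square)
next
  case False
  have "Gk N k = (sin (real N * k / 2))^2 / (sin (k/2))^2"
    using sin_Gk[of k N] False by (simp add: field_simps)
  then show ?thesis using False assms by (simp add: fejer_kernel_def field_simps)
qed

lemma cos_int0: assumes "j \<ge> 1" shows "((\<lambda>k. cos (real j * k)) has_integral 0) {-pi..pi}"
proof -
  have "((\<lambda>k. cos (real j * k)) has_integral (sin (real j * pi) / real j - sin (real j * (-pi)) / real j)) {-pi..pi}"
  proof (rule fundamental_theorem_of_calculus)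
    show "-pi \<le> pi" by simp
    fix x assume "x \<in> {-pi..pi}"
    have "((\<lambda>k. sin (real j * k)) has_real_derivative (cos (real j * x) * real j)) (at x)"
      by (rule derivative_eq_intros refl | simp)+
    then have "((\<lambda>k. sin (real j * k) / real j) has_real_derivative (cos (real j * x) * real j / real j)) (at x)"
      by (rule DERIV_cdivide)
    then show "((\<lambda>k. sin (real j * k) / real j) has_vector_derivative cos (real j * x)) (at x within {-pi..pi})"
      using assms by (simp add: has_real_derivative_iff_has_vector_derivative has_vector_derivative_at_within)
  qed
  then show ?thesis by simp
qed

lemma Dk_int: "((\<lambda>k. Dk m k) has_integral (2*pi)) {-pi..pi}"
proof -
  have "((\<lambda>k. \<Sum>j\<in>{1..m}. cos (real j * k)) has_integral (\<Sum>j\<in>{1..m}. 0)) {-pi..pi}"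
    by (rule has_integral_sum) (simp_all add: cos_int0)
  then have "((\<lambda>k. \<Sum>j\<in>{1..m}. cos (real j * k)) has_integral 0) {-pi..pi}" by simp
  then have 2: "((\<lambda>k. 2 * (\<Sum>j\<in>{1..m}. cos (real j * k))) has_integral 2 * 0) {-pi..pi}"
    by (rule has_integral_mult_right)
  have "((\<lambda>k. 1::real) has_integral (2*pi)) {-pi..pi}"
    using has_integral_const_real[of "1::real" "-pi" pi] by simp
  from this 2 have "((\<lambda>k. 1 + 2 * (\<Sum>j\<in>{1..m}. cos (real j * k))) has_integral (2*pi + 2*0)) {-pi..pi}"
    by (rule has_integral_add)
  then show ?thesis unfolding Dk_def by simp
qed

lemma Gk_int: "((\<lambda>k. Gk N k) has_integral (2*pi*real N)) {-pi..pi}"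
proof -
  have "((\<lambda>k. \<Sum>m<N. Dk m k) has_integral (\<Sum>m<N. 2*pi)) {-pi..pi}"
    by (rule has_integral_sum) (simp_all add: Dk_int)
  then show ?thesis by (simp add: Gk_def algebra_simps)
qed

lemma fejer_int: assumes "N \<ge> 1" shows "((\<lambda>k. fejer_kernel N k / (2*pi)) has_integral 1) {-pi..pi}"
proof -
  have "((\<lambda>k. Gk N k * (1/(2*pi*real N))) has_integral (2*pi*real N * (1/(2*pi*real N)))) {-pi..pi}"
    by (rule has_integral_mult_left[OF Gk_int])
  moreover have "2*pi*real N * (1/(2*pi*real N)) = 1" using assms by simp
  ultimately show ?thesis using assms by (simp add: fejer_Gk field_simps)
qed

lemma cont_Gk: "continuous_on S (Gk N)"
  unfolding Gk_def Dk_def by (intro continuous_intros)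

lemma cont_fejer: assumes "N \<ge> 1" shows "continuous_on S (fejer_kernel N)"
proof -
  have "fejer_kernel N = (\<lambda>k. Gk N k / real N)" using fejer_Gk[OF assms] by auto
  moreover have "continuous_on S (\<lambda>k. Gk N k / real N)"
    by (intro continuous_on_divide cont_Gk continuous_on_const) (use assms in auto)
  ultimately show ?thesis by simp
qed

lemma fejer_nonneg: "fejer_kernel N k \<ge> 0"
  by (simp add: fejer_kernel_def)

lemma jordan: assumes "0 \<le> x" "x \<le> pi/2" shows "2 * x / pi \<le> sin x"
proof -
  have cv: "convex_on {0..pi} (\<lambda>x. - sin x)"
  proof (rule convex_on_realI[where f' = "\<lambda>x. - cos x"])
    show "connected {0..pi}" by simp
    show "((\<lambda>x. - sin x) has_real_derivative - cos x) (at x)" for x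
      by (auto intro!: derivative_eq_intros)
    show "- cos x \<le> - cos y" if "x \<in> {0..pi}" "y \<in> {0..pi}" "x \<le> y" for x y
      using cos_monotone_0_pi_le[of x y] that by auto
  qed
  define t where "t = 2 * x / pi"
  have t: "0 \<le> t" "t \<le> 1" using assms by (auto simp: t_def field_simps)
  have "- sin ((1 - t) *\<^sub>R 0 + t *\<^sub>R (pi/2)) \<le> (1 - t) * (- sin 0) + t * (- sin (pi/2))"
    by (rule convex_onD[OF cv]) (use t in auto)
  moreover have "(1 - t) *\<^sub>R 0 + t *\<^sub>R (pi/2) = x" by (simp add: t_def)
  ultimately show ?thesis by (simp add: t_def)
qed

lemma fejer_sq: assumes "N \<ge> 1" "\<bar>k\<bar> \<le> pi" shows "fejer_kernel N k * k^2 \<le> pi^2 / real N"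
proof (cases "k = 0")
  case True then show ?thesis by simp
next
  case False
  have a: "\<bar>k/2\<bar> \<le> pi/2" using assms by simp
  have j: "2 * \<bar>k/2\<bar> / pi \<le> \<bar>sin (k/2)\<bar>"
  proof (cases "k \<ge> 0")
    case True then show ?thesis using jordan[of "k/2"] a by auto
  next
    case False then show ?thesis using jordan[of "-k/2"] a by auto
  qed
  hence j2: "\<bar>k\<bar> / pi \<le> \<bar>sin (k/2)\<bar>" by simp
  have kpos: "0 < \<bar>k\<bar> / pi" using False by simp
  hence sne: "sin (k/2) \<noteq> 0" using j2 by auto
  have sq: "(\<bar>k\<bar> / pi)^2 \<le> (sin (k/2))^2"
    using power_mono[OF j2, of 2] kpos by simp
  have "fejer_kernel N k * k^2 = (sin (real N * k / 2))^2 * k^2 / (real N * (sin (k/2))^2)"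
    using sne by (simp add: fejer_kernel_def)
  also have "\<dots> \<le> 1 * k^2 / (real N * (sin (k/2))^2)"
    by (intro divide_right_mono mult_right_mono) (auto simp: abs_square_le_1)
  also have "\<dots> \<le> k^2 / (real N * (\<bar>k\<bar> / pi)^2)"
    using assms kpos sq by (intro frac_le mult_left_mono mult_pos_pos) auto
  also have "\<dots> = pi^2 / real N" using False by (simp add: field_simps power2_eq_square)
  finally show ?thesis .
qed

lemma da_bl: assumes "dual_action \<eta>" shows "bounded_linear (\<eta> k)"
proof -
  have l: "linear (\<eta> k)" and n: "\<And>x. norm (\<eta> k x) = norm x"
    using assms by (auto simp: dual_action_def)
  show ?thesis
  proof (rule bounded_linear_intro[where K=1])
    show "\<eta> k (x + y) = \<eta> k x + \<eta> k y" for x y using l by (simp add: linear_add)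
    show "\<eta> k (r *\<^sub>R x) = r *\<^sub>R \<eta> k x" for r x using l by (simp add: linear_scale)
    show "norm (\<eta> k x) \<le> norm x * 1" for x using n by simp
  qed
qed

lemma key_bound:
  fixes \<eta> :: "real \<Rightarrow> 'a \<Rightarrow> 'a::{banach,real_normed_algebra_1}"
  assumes da: "dual_action \<eta>" and N: "N \<ge> 1" and B: "B \<ge> 0"
    and bd: "\<And>k. k \<in> {-pi..pi} \<Longrightarrow> norm (\<eta> k b - b) \<le> A + B * k^2"
  shows "norm (b - fejer_approx \<eta> N b) \<le> A + B * pi^2 / real N"
proof -
  define w where "w = (\<lambda>k. fejer_kernel N k / (2*pi))"
  have w0: "w k \<ge> 0" for k by (simp add: w_def fejer_nonneg)
  have cw: "continuous_on UNIV w" unfolding w_def by (intro continuous_intros cont_fejer N) simp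
  have ce: "continuous_on UNIV (\<lambda>k. \<eta> k b)" using da by (simp add: dual_action_def)
  have i1: "(\<lambda>k. w k *\<^sub>R \<eta> k b) integrable_on {-pi..pi}"
    by (rule integrable_continuous_interval) (intro continuous_intros continuous_on_subset[OF cw] continuous_on_subset[OF ce]; simp)
  have wi: "(w has_integral 1) {-pi..pi}" using fejer_int[OF N] by (simp add: w_def)
  have i2: "((\<lambda>k. w k *\<^sub>R b) has_integral (1 *\<^sub>R b)) {-pi..pi}"
    by (rule has_integral_scaleR_left[OF wi])
  have "b - fejer_approx \<eta> N b = integral {-pi..pi} (\<lambda>k. w k *\<^sub>R b) - integral {-pi..pi} (\<lambda>k. w k *\<^sub>R \<eta> k b)"
    using i2 by (simp add: fejer_approx_def w_def integral_unique)
  also have "\<dots> = integral {-pi..pi} (\<lambda>k. w k *\<^sub>R b - w k *\<^sub>R \<eta> k b)"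
    using i1 i2 by (simp add: integral_diff has_integral_integrable)
  finally have eq: "b - fejer_approx \<eta> N b = integral {-pi..pi} (\<lambda>k. w k *\<^sub>R b - w k *\<^sub>R \<eta> k b)" .
  have cg: "continuous_on UNIV (\<lambda>k. w k * (A + B * k^2))" by (intro continuous_intros cw)
  have ig: "(\<lambda>k. w k * (A + B * k^2)) integrable_on {-pi..pi}"
    by (rule integrable_continuous_interval) (rule continuous_on_subset[OF cg], simp)
  have "norm (integral {-pi..pi} (\<lambda>k. w k *\<^sub>R b - w k *\<^sub>R \<eta> k b)) \<le> integral {-pi..pi} (\<lambda>k. w k * (A + B * k^2))"
  proof (rule integral_norm_bound_integral)
    show "(\<lambda>k. w k *\<^sub>R b - w k *\<^sub>R \<eta> k b) integrable_on {-pi..pi}"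
      using i1 i2 by (intro integrable_diff) (auto simp: has_integral_integrable)
    show "(\<lambda>k. w k * (A + B * k^2)) integrable_on {-pi..pi}" by (rule ig)
    fix k assume k: "k \<in> {-pi..pi}"
    have "norm (w k *\<^sub>R b - w k *\<^sub>R \<eta> k b) = w k * norm (\<eta> k b - b)"
      using w0[of k] by (simp add: scaleR_diff_right[symmetric] norm_minus_commute)
    also have "\<dots> \<le> w k * (A + B * k^2)" using bd[OF k] w0[of k] by (rule mult_left_mono)
    finally show "norm (w k *\<^sub>R b - w k *\<^sub>R \<eta> k b) \<le> w k * (A + B * k^2)" .
  qed
  also have "integral {-pi..pi} (\<lambda>k. w k * (A + B * k^2)) \<le> A + B * pi^2 / real N"
  proof -
    have h1: "((\<lambda>k. A * w k) has_integral (A * 1)) {-pi..pi}" by (rule has_integral_mult_right[OF wi])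
    have h2: "((\<lambda>k. B * pi^2 / (2*pi*real N)) has_integral (2*pi) * (B * pi^2 / (2*pi*real N))) {-pi..pi}"
      using has_integral_const_real[of "B * pi^2 / (2*pi*real N)" "-pi" pi] by simp
    have h: "((\<lambda>k. A * w k + B * pi^2 / (2*pi*real N)) has_integral (A * 1 + (2*pi) * (B * pi^2 / (2*pi*real N)))) {-pi..pi}"
      by (rule has_integral_add[OF h1 h2])
    have "integral {-pi..pi} (\<lambda>k. w k * (A + B * k^2)) \<le> A * 1 + (2*pi) * (B * pi^2 / (2*pi*real N))"
    proof (rule has_integral_le[OF integrable_integral[OF ig] h])
      fix k assume k: "k \<in> {-pi..pi}"
      have "fejer_kernel N k * k^2 \<le> pi^2 / real N" using k by (intro fejer_sq N) auto
      hence "B * (fejer_kernel N k * k^2) \<le> B * (pi^2 / real N)" using B by (rule mult_left_mono)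
      hence "B * (fejer_kernel N k * k^2) / (2*pi) \<le> B * (pi^2 / real N) / (2*pi)"
        by (rule divide_right_mono) simp
      moreover have "w k * (A + B * k^2) = A * w k + B * (fejer_kernel N k * k^2) / (2*pi)"
        by (simp add: w_def field_simps)
      moreover have "B * pi^2 / (2*pi*real N) = B * (pi^2 / real N) / (2*pi)" by simp
      ultimately show "w k * (A + B * k^2) \<le> A * w k + B * pi^2 / (2*pi*real N)"
        by linarith
    qed
    also have "A * 1 + (2*pi) * (B * pi^2 / (2*pi*real N)) = A + B * pi^2 / real N" by simp
    finally show ?thesis .
  qed
  finally show ?thesis using eq by simp
qed

lemma mvt_bound:
  fixes \<eta> :: "real \<Rightarrow> 'a \<Rightarrow> 'a::{banach,real_normed_algebra_1}"
  assumes da: "dual_action \<eta>" and d: "((\<lambda>k. \<eta> k b) has_vector_derivative db) (at 0)"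
  shows "norm (\<eta> k b - b) \<le> norm db * \<bar>k\<bar>"
proof -
  have grp: "\<eta> (x + h) b = \<eta> x (\<eta> h b)" for x h using da by (simp add: dual_action_def)
  have e0: "\<eta> 0 b = b" using da by (simp add: dual_action_def)
  have der: "((\<lambda>k. \<eta> k b) has_vector_derivative \<eta> x db) (at x)" for x
  proof -
    have s: "((\<lambda>k. k - x) has_vector_derivative 1) (at x)"
      using has_real_derivative_iff_has_vector_derivative[THEN iffD1, OF DERIV_diff[OF DERIV_ident DERIV_const]]
      by simp
    have d': "((\<lambda>k. \<eta> k b) has_vector_derivative db) (at ((\<lambda>k. k - x) x))" using d by simp
    have "(((\<lambda>k. \<eta> k b) \<circ> (\<lambda>k. k - x)) has_vector_derivative (1 *\<^sub>R db)) (at x)"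
      by (rule vector_diff_chain_at[OF s d'])
    then have "((\<lambda>k. \<eta> x (\<eta> (k - x) b)) has_vector_derivative \<eta> x db) (at x)"
      using bounded_linear.has_vector_derivative[OF da_bl[OF da]] by (simp add: comp_def)
    moreover have "(\<lambda>k. \<eta> x (\<eta> (k - x) b)) = (\<lambda>k. \<eta> k b)"
      using grp by (metis add.commute diff_add_cancel)
    ultimately show ?thesis by simp
  qed
  have "norm (\<eta> k b - \<eta> 0 b) \<le> norm db * norm (k - 0)"
  proof (rule differentiable_bound[where S=UNIV and f'="\<lambda>x h. h *\<^sub>R \<eta> x db"])
    show "convex (UNIV::real set)" by simp
    show "((\<lambda>k. \<eta> k b) has_derivative (\<lambda>h. h *\<^sub>R \<eta> x db)) (at x within UNIV)" for x
      using der[of x] by (simp add: has_vector_derivative_def)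
    show "onorm (\<lambda>h. h *\<^sub>R \<eta> x db) \<le> norm db" for x
    proof -
      have "onorm (\<lambda>h::real. h *\<^sub>R \<eta> x db) \<le> onorm (\<lambda>h::real. h) * norm (\<eta> x db)"
        by (rule onorm_scaleR_left_lemma) (rule bounded_linear_ident)
      also have "\<dots> = norm db" using da by (simp add: dual_action_def onorm_id)
      finally show ?thesis .
    qed
  qed auto
  then show ?thesis using e0 by simp
qed

theorem lemma16:
  fixes \<eta> :: "real \<Rightarrow> 'a \<Rightarrow> 'a::{banach,real_normed_algebra_1}"
    and b :: 'a
  assumes "dual_action \<eta>"
  shows "(\<lambda>N. norm (b - fejer_approx \<eta> N b)) \<longlonglongrightarrow> 0 \<and>
         (\<forall>db. ((\<lambda>k. \<eta> k b) has_vector_derivative db) (at 0) \<longrightarrow>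
            (\<forall>N::nat. N \<ge> 1 \<longrightarrow>
               norm (b - fejer_approx \<eta> N b)
                 \<le> pi / sqrt (real N) * norm db + 2 / sqrt (real N) * norm b))"
proof
  have da: "dual_action \<eta>" by (rule assms)
  have nrm: "norm (\<eta> k x) = norm x" for k x using da by (simp add: dual_action_def)
  have e0: "\<eta> 0 b = b" using da by (simp add: dual_action_def)
  show "(\<lambda>N. norm (b - fejer_approx \<eta> N b)) \<longlonglongrightarrow> 0"
  proof (rule LIMSEQ_I)
    fix r :: real assume r: "0 < r"
    have "continuous_on UNIV (\<lambda>k. \<eta> k b)" using da by (simp add: dual_action_def)
    hence ic: "isCont (\<lambda>k. \<eta> k b) 0" by (simp add: continuous_on_eq_continuous_at)
    obtain d where d: "d > 0" and dd: "\<And>x. x \<noteq> 0 \<and> norm (x - 0) < d \<Longrightarrow> norm (\<eta> x b - \<eta> 0 b) < r/2"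
      using LIM_D[OF isContD[OF ic], of "r/2"] r by auto
    define B where "B = 2 * norm b / d^2"
    have B0: "B \<ge> 0" by (simp add: B_def)
    have bd: "norm (\<eta> k b - b) \<le> r/2 + B * k^2" for k
    proof (cases "\<bar>k\<bar> < d")
      case True
      show ?thesis
      proof (cases "k = 0")
        case True then show ?thesis using e0 r B0 by simp
      next
        case False then have "norm (\<eta> k b - b) < r/2" using dd[of k] True e0 by simp
        moreover have "B * k^2 \<ge> 0" using B0 by simp
        ultimately show ?thesis by linarith
      qed
    next
      case False
      hence "d^2 \<le> k^2" using d by (metis abs_le_square_iff abs_of_pos linorder_not_less)
      hence "1 \<le> k^2 / d^2" using d by simp
      hence "2 * norm b * 1 \<le> 2 * norm b * (k^2 / d^2)" by (intro mult_left_mono) auto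
      moreover have "norm (\<eta> k b - b) \<le> 2 * norm b"
        using norm_triangle_ineq4[of "\<eta> k b" b] nrm[of k b] by simp
      ultimately show ?thesis using r by (simp add: B_def)
    qed
    obtain n0 :: nat where n0: "B * pi^2 / (r/2) < real n0" using reals_Archimedean2 by blast
    show "\<exists>no. \<forall>n\<ge>no. norm (norm (b - fejer_approx \<eta> n b) - 0) < r"
    proof (intro exI allI impI)
      fix n assume n: "n \<ge> Suc n0"
      hence n1: "n \<ge> 1" by simp
      have "norm (b - fejer_approx \<eta> n b) \<le> r/2 + B * pi^2 / real n"
        by (rule key_bound[OF da n1 B0 bd])
      moreover have "B * pi^2 / real n < r/2"
      proof -
        have "B * pi^2 / (r/2) < real n" using n0 n by linarith
        then have "B * pi^2 < r/2 * real n" using r by (simp add: field_simps)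
        then show ?thesis using n1 by (simp add: field_simps)
      qed
      ultimately have "norm (b - fejer_approx \<eta> n b) < r" by linarith
      then show "norm (norm (b - fejer_approx \<eta> n b) - 0) < r" by simp
    qed
  qed
next
  show "\<forall>db. ((\<lambda>k. \<eta> k b) has_vector_derivative db) (at 0) \<longrightarrow>
            (\<forall>N::nat. N \<ge> 1 \<longrightarrow>
               norm (b - fejer_approx \<eta> N b)
                 \<le> pi / sqrt (real N) * norm db + 2 / sqrt (real N) * norm b)"
  proof (intro allI impI)
    have da: "dual_action \<eta>" by (rule assms)
    fix db N assume der: "((\<lambda>k. \<eta> k b) has_vector_derivative db) (at 0)" and N: "(N::nat) \<ge> 1"
    define s where "s = sqrt (real N)"
    have s0: "s > 0" using N by (simp add: s_def)
    have ss: "s * s = real N" using N by (simp add: s_def)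
    define dl where "dl = pi / s"
    have dl0: "dl > 0" using s0 by (simp add: dl_def)
    have bd: "norm (\<eta> k b - b) \<le> norm db * dl / 2 + (norm db / (2*dl)) * k^2" for k
    proof -
      have e: "(\<bar>k\<bar> - dl)^2 = k^2 - 2*dl*\<bar>k\<bar> + dl^2" by (simp add: power2_diff algebra_simps)
      have "0 \<le> (\<bar>k\<bar> - dl)^2" by simp
      hence "2 * dl * \<bar>k\<bar> \<le> dl^2 + k^2" using e by linarith
      hence "\<bar>k\<bar> \<le> dl / 2 + k^2 / (2*dl)" using dl0 by (simp add: field_simps power2_eq_square)
      hence "norm db * \<bar>k\<bar> \<le> norm db * (dl / 2 + k^2 / (2*dl))" by (intro mult_left_mono) auto
      also have "\<dots> = norm db * dl / 2 + (norm db / (2*dl)) * k^2" by (simp add: field_simps)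
      finally show ?thesis using mvt_bound[OF da der, of k] by linarith
    qed
    have "norm (b - fejer_approx \<eta> N b) \<le> norm db * dl / 2 + (norm db / (2*dl)) * pi^2 / real N"
      by (rule key_bound[OF da N _ bd]) (use dl0 in simp)
    also have "norm db * dl / 2 + (norm db / (2*dl)) * pi^2 / real N = pi / s * norm db"
      using s0 ss by (simp add: dl_def field_simps power2_eq_square flip: ss)
    also have "\<dots> \<le> pi / s * norm db + 2 / s * norm b" using s0 by simp
    finally show "norm (b - fejer_approx \<eta> N b) \<le> pi / sqrt (real N) * norm db + 2 / sqrt (real N) * norm b"
      by (simp add: s_def)
  qed
qed

end
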